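(* Let $m,n$ be integers, let $G=\langle a,b\mid a w_k^n b=w_k^{n+1}\rangle$ where $w_k=(ab^{-1})^m ab(a^{-1}b)^m$, and let $r=w_k^n(ab^{-1})^m$. Then $G=\langle a,b\mid r=\overleftarrow{r}\rangle$.
   Context: For a word $u$ in the free group $F_{a,b}$, $\overleftarrow{u}$ denotes the word obtained from $u$ by writing its letters in reversed order (e.g. $\overleftarrow{ab^{-1}}=b^{-1}a$). The group $G$ is the link group $\pi_1(S^3-J(k,l))$ of the double twist link with $k=2m+1$, $l=2n+1$. *)

theory Defs
  imports Main
begin

text \<open>Words in the free group on the generators a, b. A letter is a generator
together with a flag: False = the generator itself, True = its inverse.\<close>

datatype gen = GA | GB

type_synonym letter = "gen \<times> bool"
type_synonym word = "letter list"

definition ga :: word where "ga = [(GA, False)]"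
definition gb :: word where "gb = [(GB, False)]"

fun inv_letter :: "letter \<Rightarrow> letter" where
  "inv_letter (g, e) = (g, \<not> e)"

definition word_inv :: "word \<Rightarrow> word" where
  "word_inv w = rev (map inv_letter w)"

definition word_pow :: "word \<Rightarrow> int \<Rightarrow> word" where
  "word_pow w k = (if 0 \<le> k then concat (replicate (nat k) w)
                   else concat (replicate (nat (- k)) (word_inv w)))"

definition word_rev :: "word \<Rightarrow> word" where
  "word_rev w = rev w"

inductive pres_eq :: "word set \<Rightarrow> word \<Rightarrow> word \<Rightarrow> bool" for R :: "word set" where
  refl: "pres_eq R u u"
| sym: "pres_eq R u v \<Longrightarrow> pres_eq R v u"
| trans: "pres_eq R u v \<Longrightarrow> pres_eq R v w \<Longrightarrow> pres_eq R u w"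
| cancel: "pres_eq R (u @ [x, inv_letter x] @ v) (u @ v)"
| relator: "r \<in> R \<Longrightarrow> pres_eq R (u @ r @ v) (u @ v)"

definition relation :: "word \<Rightarrow> word \<Rightarrow> word" where
  "relation l r = l @ word_inv r"

definition wk :: "int \<Rightarrow> word" where
  "wk m = word_pow (ga @ word_inv gb) m @ ga @ gb @ word_pow (word_inv ga @ gb) m"

definition rk :: "int \<Rightarrow> int \<Rightarrow> word" where
  "rk m n = word_pow (wk m) n @ word_pow (ga @ word_inv gb) m"

end

theory Submission
  imports Defs
begin

lemma pe_ctx: "pres_eq R u u' \<Longrightarrow> pres_eq R (p @ u @ q) (p @ u' @ q)"
proof (induction rule: pres_eq.induct)
  case (refl u) then show ?case by (blast intro: pres_eq.intros)
next
  case (sym u v) then show ?case by (blast intro: pres_eq.intros)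
next
  case (trans u v w) then show ?case by (metis pres_eq.trans)
next
  case (cancel u x v)
  then show ?case using pres_eq.cancel[of R "p @ u" x "v @ q"] by simp
next
  case (relator r u v)
  then show ?case using pres_eq.relator[of r R "p @ u" "v @ q"] by simp
qed

lemma pe_app: "pres_eq R u u' \<Longrightarrow> pres_eq R v v' \<Longrightarrow> pres_eq R (u @ v) (u' @ v')"
  using pe_ctx[of R u u' "[]" v] pe_ctx[of R v v' u' "[]"] by (simp add: pres_eq.trans)

lemma inv_letter_inv[simp]: "inv_letter (inv_letter x) = x"
  by (cases x) simp

lemma word_inv_append[simp]: "word_inv (u @ v) = word_inv v @ word_inv u"
  by (simp add: word_inv_def)

lemma word_inv_inv[simp]: "word_inv (word_inv u) = u"
  by (simp add: word_inv_def rev_map comp_def)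

lemma word_inv_Nil[simp]: "word_inv [] = []" by (simp add: word_inv_def)

lemma inv_cancel: "pres_eq R (w @ word_inv w) []"
proof (induction w)
  case Nil then show ?case by (simp add: pres_eq.refl)
next
  case (Cons x w)
  have "x # w @ word_inv (x # w) = [x] @ (w @ word_inv w) @ [inv_letter x]"
    by (simp add: word_inv_def)
  moreover have "pres_eq R ([x] @ (w @ word_inv w) @ [inv_letter x]) ([x] @ [] @ [inv_letter x])"
    by (rule pe_ctx[OF Cons.IH])
  moreover have "pres_eq R ([] @ [x, inv_letter x] @ []) ([] @ [])"
    by (rule pres_eq.cancel)
  ultimately show ?case by (auto intro: pres_eq.trans)
qed

lemma pe_word_inv: "pres_eq R u v \<Longrightarrow> R = {} \<Longrightarrow> pres_eq R (word_inv u) (word_inv v)"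
proof (induction rule: pres_eq.induct)
  case (refl u) then show ?case by (blast intro: pres_eq.intros)
next
  case (sym u v) then show ?case by (simp add: pres_eq.sym)
next
  case (trans u v w) then show ?case by (metis pres_eq.trans)
next
  case (cancel u x v)
  then show ?case using pres_eq.cancel[of R "word_inv v" x "word_inv u"]
    by (simp add: word_inv_def)
next
  case (relator r u v) then show ?case by simp
qed

lemma pe_mono: "pres_eq R u v \<Longrightarrow> (\<And>r. r \<in> R \<Longrightarrow> pres_eq S r []) \<Longrightarrow> pres_eq S u v"
proof (induction rule: pres_eq.induct)
  case (refl u) then show ?case by (blast intro: pres_eq.intros)
next
  case (sym u v) then show ?case by (simp add: pres_eq.sym)
next
  case (trans u v w) then show ?case by (metis pres_eq.trans)
next
  case (cancel u x v) then show ?case by (blast intro: pres_eq.intros)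
next
  case (relator r u v) then show ?case using pe_ctx[of S r "[]" u v] by simp
qed

lemma pe_equivp: "equivp (pres_eq {})"
  by (rule equivpI) (auto simp: reflp_def symp_def transp_def intro: pres_eq.intros)

quotient_type fg = word / "pres_eq {}"
  by (rule pe_equivp)

instantiation fg :: "{monoid_add, uminus}"
begin
lift_definition zero_fg :: fg is "[]" .
lift_definition plus_fg :: "fg \<Rightarrow> fg \<Rightarrow> fg" is "(@)" by (rule pe_app)
lift_definition uminus_fg :: "fg \<Rightarrow> fg" is word_inv by (simp add: pe_word_inv)
instance
proof
  fix a b c :: fg
  show "a + b + c = a + (b + c)" by transfer (simp add: pres_eq.refl)
  show "0 + a = a" by transfer (simp add: pres_eq.refl)
  show "a + 0 = a" by transfer (simp add: pres_eq.refl)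
qed
end

lemma fg_right_inv0: "a + - a = (0::fg)"
  by transfer (rule inv_cancel)

lemma fg_assoc: "(a::fg) + b + c = a + (b + c)"
  by (rule add.assoc)

lemma fg_rcancel: "a + c = b + c \<Longrightarrow> (a::fg) = b"
proof -
  assume h: "a + c = b + c"
  have "a = a + c + - c" by (simp only: fg_assoc fg_right_inv0 add_0_right)
  also have "\<dots> = b + c + - c" by (simp only: h)
  also have "\<dots> = b" by (simp only: fg_assoc fg_right_inv0 add_0_right)
  finally show ?thesis .
qed

lemma fg_left_inv[simp]: "- a + a = (0::fg)"
  by transfer (metis inv_cancel word_inv_inv)

lemma fg_right_inv[simp]: "a + - a = (0::fg)"
  by transfer (rule inv_cancel)

lemma fg_minus_minus[simp]: "- (- a) = (a::fg)"
  by transfer (simp add: pres_eq.refl)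

lemma fg_minus_add: "- (a + b) = - b + (- a :: fg)"
  by transfer (simp add: pres_eq.refl)

lemma fg_minus_zero[simp]: "- 0 = (0::fg)"
  by transfer (simp add: pres_eq.refl)

lemma fg_cancel1[simp]: "- a + (a + b) = (b::fg)"
  by (simp add: fg_assoc[symmetric])

lemma fg_cancel2[simp]: "a + (- a + b) = (b::fg)"
  by (simp add: fg_assoc[symmetric])

fun gpn :: "fg \<Rightarrow> nat \<Rightarrow> fg" where
  "gpn g 0 = 0"
| "gpn g (Suc n) = g + gpn g n"

definition gp :: "fg \<Rightarrow> int \<Rightarrow> fg" where
  "gp g k = (if 0 \<le> k then gpn g (nat k) else gpn (- g) (nat (- k)))"

lemma gpn_comm: "gpn g n + g = g + gpn g n"
  by (induction n) (simp_all add: fg_assoc)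

lemma gpn_neg: "gpn (- g) n = - gpn g n"
proof (induction n)
  case 0 then show ?case by simp
next
  case (Suc n)
  have "- gpn g (Suc n) = - (gpn g n + g)" by (simp add: gpn_comm)
  also have "\<dots> = - g + - gpn g n" by (simp add: fg_minus_add)
  finally show ?case using Suc by simp
qed

lemma gpn_conj: "gpn (- c + g + c) n = - c + gpn g n + c"
proof (induction n)
  case 0 then show ?case by simp
next
  case (Suc n)
  then show ?case by (simp add: fg_assoc)
qed

lemma gp_negnat: "gp g (- int j) = gpn (- g) j"
  unfolding gp_def by (cases "j = 0") auto

lemma gp_succ: "gp g (k + 1) = gp g k + g"
proof (cases "0 \<le> k")
  case True
  then have nk: "nat (k + 1) = Suc (nat k)" by simp
  have a: "gp g (k + 1) = gpn g (nat (k + 1))" using True by (simp add: gp_def)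
  have b: "gp g k = gpn g (nat k)" using True by (simp add: gp_def)
  show ?thesis by (simp only: a b nk gpn.simps gpn_comm)
next
  case False
  define j where "j = nat (- k) - 1"
  have kj: "k = - int (Suc j)" using False unfolding j_def by simp
  have k1: "k + 1 = - int j" using kj by simp
  have "gp g k = gpn (- g) (Suc j)" unfolding kj by (rule gp_negnat)
  then have "gp g k + g = gpn (- g) j + - g + g" by (simp add: gpn_comm)
  also have "\<dots> = gpn (- g) j" by (simp add: fg_assoc)
  finally show ?thesis using k1 gp_negnat by simp
qed

lemma gp_add: "gp g (i + j) = gp g i + gp g j"
proof (induction j rule: int_induct[where k=0])
  case base then show ?case by (simp add: gp_def)
next
  case (step1 j)
  have e: "i + (j + 1) = i + j + 1" by simp
  show ?case unfolding e using step1 gp_succ[of g "i + j"] gp_succ[of g j] by (simp add: fg_assoc)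
next
  case (step2 j)
  have a: "gp g (i + j) = gp g (i + j - 1) + g" using gp_succ[of g "i + j - 1"] by simp
  have b: "gp g j = gp g (j - 1) + g" using gp_succ[of g "j - 1"] by simp
  from step2 a b have "gp g (i + j - 1) + g = gp g i + gp g (j - 1) + g"
    by (simp only: fg_assoc)
  then have c: "gp g (i + j - 1) = gp g i + gp g (j - 1)" by (rule fg_rcancel)
  have e: "i + (j - 1) = i + j - 1" by simp
  show ?case unfolding e by (rule c)
qed

lemma gp_one: "gp g 1 = g" by (simp add: gp_def)

lemma gp_neg: "gp (- g) k = - gp g k"
  by (simp add: gp_def gpn_neg)

lemma gp_conj: "gp (- c + g + c) k = - c + gp g k + c"
proof (cases "0 \<le> k")
  case True then show ?thesis by (simp add: gp_def gpn_conj)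
next
  case False
  have "- (- c + g + c) = - c + - g + c" by (simp add: fg_minus_add fg_assoc)
  then show ?thesis using False gpn_conj[of c "- g"] by (simp add: gp_def gpn_neg)
qed

lemma abs_append: "abs_fg (u @ v) = abs_fg u + abs_fg v"
  by (simp add: plus_fg.abs_eq)

lemma abs_inv: "abs_fg (word_inv u) = - abs_fg u"
  by (simp add: uminus_fg.abs_eq)

lemma abs_Nil: "abs_fg [] = 0"
  by (simp add: zero_fg.abs_eq)

lemma abs_rep: "abs_fg (concat (replicate n u)) = gpn (abs_fg u) n"
  by (induction n) (simp_all add: abs_append abs_Nil)

lemma abs_pow: "abs_fg (word_pow u k) = gp (abs_fg u) k"
  by (simp add: word_pow_def gp_def abs_rep abs_inv)

lemma rev_inv: "rev (word_inv u) = word_inv (rev u)"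
  by (simp add: word_inv_def rev_map)

lemma rev_pow: "rev (word_pow u k) = word_pow (rev u) k"
  by (simp add: word_pow_def rev_concat rev_inv)


lemma key:
  fixes A B :: fg and m n :: int
  defines "X \<equiv> A + - B" and "Y \<equiv> - A + B"
  defines "W \<equiv> gp X m + (A + (B + gp Y m))"
  defines "W' \<equiv> gp (- X) m + (B + (A + gp (- Y) m))"
  defines "E \<equiv> A + gp W n + gp X m + gp Y m + - A + - gp W n"
  shows "A + (gp W n + (B + - gp W (n + 1))) = E"
    and "gp W n + gp X m + - (gp (- Y) m + gp W' n) = - A + E + A"
proof -
  have f1: "gp X m + A = A + - gp Y m"
  proof -
    have "- A + X + A = - Y" by (simp add: X_def Y_def fg_assoc fg_minus_add)
    then have "- A + gp X m + A = - gp Y m" using gp_conj[of A X m] by (simp add: gp_neg)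
    then have "A + (- A + gp X m + A) = A + - gp Y m" by simp
    then show ?thesis by (simp add: fg_assoc)
  qed
  have f2: "B + gp Y m = - gp X m + B"
  proof -
    have "- (- B) + Y + - B = - X" by (simp add: X_def Y_def fg_assoc fg_minus_add)
    then have "B + gp Y m + - B = - gp X m" using gp_conj[of "- B" Y m] by (simp add: gp_neg)
    then have "B + gp Y m + - B + B = - gp X m + B" by simp
    then show ?thesis by (simp add: fg_assoc)
  qed
  define S where "S = - gp Y m + - gp X m"
  have wS: "W = A + S + B"
  proof -
    have "W = gp X m + A + (B + gp Y m)" by (simp add: W_def fg_assoc)
    also have "\<dots> = A + - gp Y m + (- gp X m + B)" by (simp add: f1 f2)
    finally show ?thesis by (simp add: S_def fg_assoc)
  qed
  have "gp W (n + 1) = gp W n + W" by (simp add: gp_add gp_one)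
  then have "- gp W (n + 1) = - B + gp X m + gp Y m + - A + - gp W n"
    by (simp add: wS S_def fg_minus_add fg_assoc)
  then show "A + (gp W n + (B + - gp W (n + 1))) = E"
    by (simp add: E_def fg_assoc)
  define T where "T = S + B + A"
  have "W' = - (- gp Y m) + T + - gp Y m"
    by (simp add: W'_def T_def S_def gp_neg fg_assoc)
  then have w'n: "gp W' n = gp Y m + gp T n + - gp Y m" using gp_conj[of "- gp Y m" T n] by simp
  have "T = - A + W + A" by (simp add: wS T_def fg_assoc)
  then have tn: "gp T n = - A + gp W n + A" using gp_conj[of A W n] by simp
  show "gp W n + gp X m + - (gp (- Y) m + gp W' n) = - A + E + A"
    by (simp add: w'n tn gp_neg fg_minus_add E_def fg_assoc)
qed


lemma conj_rel:
  assumes "pres_eq {} r1 (c @ r2 @ word_inv c)"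
  shows "pres_eq {r2} r1 []"
proof -
  have "pres_eq {r2} r1 (c @ r2 @ word_inv c)" using pe_mono[OF assms] by simp
  moreover have "pres_eq {r2} (c @ r2 @ word_inv c) (c @ word_inv c)"
    by (rule pres_eq.relator) simp
  moreover have "pres_eq {r2} (c @ word_inv c) []" by (rule inv_cancel)
  ultimately show ?thesis by (blast intro: pres_eq.trans)
qed

lemma abs_eq_pe: "abs_fg u = abs_fg v \<Longrightarrow> pres_eq {} u v"
  by (simp add: fg.abs_eq_iff)

theorem lemma3p2:
  fixes m n :: int
  shows "pres_eq {relation (ga @ word_pow (wk m) n @ gb) (word_pow (wk m) (n + 1))}
       = pres_eq {relation (rk m n) (word_rev (rk m n))}"
proof -
  define r1 where "r1 = relation (ga @ word_pow (wk m) n @ gb) (word_pow (wk m) (n + 1))"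
  define r2 where "r2 = relation (rk m n) (word_rev (rk m n))"
  define A where "A = abs_fg ga"
  define B where "B = abs_fg gb"
  have ax: "abs_fg (ga @ word_inv gb) = A + - B" by (simp add: abs_append abs_inv A_def B_def)
  have ay: "abs_fg (word_inv ga @ gb) = - A + B" by (simp add: abs_append abs_inv A_def B_def)
  have arx: "abs_fg (rev (ga @ word_inv gb)) = - (- A + B)"
  proof -
    have "rev (ga @ word_inv gb) = word_inv gb @ ga" by (simp add: ga_def gb_def word_inv_def)
    then show ?thesis by (simp add: abs_append abs_inv A_def B_def fg_minus_add)
  qed
  have ary: "abs_fg (rev (word_inv ga @ gb)) = - (A + - B)"
  proof -
    have "rev (word_inv ga @ gb) = gb @ word_inv ga" by (simp add: ga_def gb_def word_inv_def)
    then show ?thesis by (simp add: abs_append abs_inv A_def B_def fg_minus_add)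
  qed
  have aga: "rev ga = ga" "rev gb = gb" by (simp_all add: ga_def gb_def)
  define X where "X = A + - B"
  define Y where "Y = - A + B"
  have aw: "abs_fg (wk m) = gp X m + (A + (B + gp Y m))"
    by (simp add: wk_def abs_append abs_pow abs_inv X_def Y_def A_def B_def)
  have arw: "abs_fg (rev (wk m)) = gp (- X) m + (B + (A + gp (- Y) m))"
    by (simp add: wk_def abs_append abs_pow rev_pow rev_inv aga abs_inv X_def Y_def A_def B_def fg_minus_add)
  have e1: "abs_fg r1 = A + (gp (abs_fg (wk m)) n + (B + - gp (abs_fg (wk m)) (n + 1)))"
    by (simp add: r1_def relation_def abs_append abs_inv abs_pow A_def B_def fg_assoc)
  have e2: "abs_fg r2 = gp (abs_fg (wk m)) n + gp X m
       + - (gp (- Y) m + gp (abs_fg (rev (wk m))) n)"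
    by (simp add: r2_def relation_def rk_def word_rev_def abs_append abs_inv abs_pow rev_pow
        rev_inv aga abs_inv X_def Y_def A_def B_def fg_minus_add fg_assoc)
  note k = key[of A B m n, folded X_def Y_def, folded aw arw]
  have "abs_fg r1 = abs_fg (ga @ r2 @ word_inv ga)"
    using k e1 e2 by (simp add: abs_append abs_inv A_def[symmetric] fg_assoc)
  then have c1: "pres_eq {r2} r1 []" by (intro conj_rel abs_eq_pe)
  have "abs_fg r2 = abs_fg (word_inv ga @ r1 @ ga)"
    using k e1 e2 by (simp add: abs_append abs_inv A_def[symmetric] fg_assoc)
  then have c2: "pres_eq {r1} r2 []" using conj_rel[of r2 "word_inv ga" r1] abs_eq_pe by simp
  have "pres_eq {r1} = pres_eq {r2}"
  proof (intro ext iffI)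
    fix u v assume "pres_eq {r1} u v" then show "pres_eq {r2} u v"
      using pe_mono c1 by blast
  next
    fix u v assume "pres_eq {r2} u v" then show "pres_eq {r1} u v"
      using pe_mono c2 by blast
  qed
  then show ?thesis by (simp add: r1_def r2_def)
qed

end
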